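(* For each $x_{k-1}$, $$-\ln\int_{\mathcal{U}}q(u_k\mid x_{k-1})\exp\Big(-D_{KL}\big(\bar p(\cdot\mid x_{k-1},u_k)\|q(\cdot\mid x_{k-1},u_k)\big)-\mathbb{E}_{\bar p(\cdot\mid x_{k-1},u_k)}[\bar c(X_k)]-c^{(u)}_k(u_k)\Big)du_k$$ $$<-\ln\int_{\mathcal{U}}q(u_k\mid x_{k-1})\exp\Big(-\eta_k(x_{k-1},u_k)-\tilde c(x_{k-1},u_k)-c^{(u)}_k(u_k)\Big)du_k,$$ where $\tilde c(x_{k-1},u_k)=\min_{\alpha\ge0}\tilde V_\alpha(x_{k-1},u_k)$ with $\tilde V_0=M(x_{k-1},u_k):=\limsup_{x_k\in\mathrm{supp}\,\bar p(\cdot\mid x_{k-1},u_k)}\ln\big(\bar p(x_k\mid x_{k-1},u_k)e^{\bar c(x_k)}/q(x_k\mid x_{k-1},u_k)\big)$ and, for $\alpha>0$, $\tilde V_\alpha(x_{k-1},u_k)=\alpha\ln\mathbb{E}_{\bar p(\cdot\mid x_{k-1},u_k)}\big[\big(\bar p(X_k\mid x_{k-1},u_k)e^{\bar c(X_k)}/q(X_k\mid x_{k-1},u_k)\big)^{1/\alpha}\big]+\alpha\eta_k(x_{k-1},u_k)$. (That is, an agent affected by ambiguity cannot achieve a lower cost than the optimal cost of an ambiguity-free agent.)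
   Context: State space $\mathcal{X}\subseteq\mathbb{K}^n$, action space $\mathcal{U}\subseteq\mathbb{K}^p$, $\mathbb{K}\in\{\mathbb{R},\mathbb{Z}\}$ (pdfs or pmfs); $D_{KL}(p\|q)=\int p\ln(p/q)$. $q(u_k\mid x_{k-1})$ is a reference policy; $\bar p(x_k\mid x_{k-1},u_k)$ a nominal model; $q(x_k\mid x_{k-1},u_k)$ a bounded generative model with $\mathrm{supp}\,\bar p\subseteq\mathrm{supp}\,q$; $\eta_k(x_{k-1},u_k)>0$ an ambiguity radius uniformly bounded by a finite constant; $\bar c:\mathcal{X}\to\mathbb{R}$ non-negative and bounded; $c^{(u)}_k:\mathcal{U}\to\mathbb{R}$ a non-negative, lower bounded action cost. *)

theory Defs
  imports "HOL-Analysis.Analysis"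
begin

text \<open>Reference measures. The flag disc selects the case K = Z (pmfs, counting
measure on a subset of the integer lattice) versus K = R (pdfs, Lebesgue measure
on a Borel subset).\<close>

definition admissible_space :: "bool \<Rightarrow> 'a::euclidean_space set \<Rightarrow> bool" where
  "admissible_space disc S \<longleftrightarrow>
     (if disc then S \<subseteq> {x. \<forall>b\<in>Basis. x \<bullet> b \<in> \<int>} else S \<in> sets lborel)"

definition ref_measure :: "bool \<Rightarrow> 'a::euclidean_space set \<Rightarrow> 'a measure" where
  "ref_measure disc S = (if disc then count_space S else restrict_space lborel S)"

definition KL :: "'a measure \<Rightarrow> ('a \<Rightarrow> real) \<Rightarrow> ('a \<Rightarrow> real) \<Rightarrow> real" where
  "KL M p q = (\<integral>x. p x * ln (p x / q x) \<partial>M)"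

definition expect :: "'a measure \<Rightarrow> ('a \<Rightarrow> real) \<Rightarrow> ('a \<Rightarrow> real) \<Rightarrow> real" where
  "expect M p f = (\<integral>x. p x * f x \<partial>M)"

definition Mval :: "'a set \<Rightarrow> ('a \<Rightarrow> real) \<Rightarrow> ('a \<Rightarrow> real) \<Rightarrow> ('a \<Rightarrow> real) \<Rightarrow> ereal" where
  "Mval S p q c = (SUP x\<in>{x\<in>S. p x > 0}. ereal (ln (p x * exp (c x) / q x)))"

definition Valpha :: "'a measure \<Rightarrow> ('a \<Rightarrow> real) \<Rightarrow> ('a \<Rightarrow> real) \<Rightarrow> ('a \<Rightarrow> real) \<Rightarrow> real \<Rightarrow> real \<Rightarrow> ereal" where
  "Valpha M p q c eta \<alpha> =
     (let E = (\<integral>\<^sup>+x. ennreal (p x * (p x * exp (c x) / q x) powr (1 / \<alpha>)) \<partial>M)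
      in if E = \<infinity> then \<infinity> else ereal (\<alpha> * ln (enn2real E) + \<alpha> * eta))"

definition Vtilde :: "'a measure \<Rightarrow> ('a \<Rightarrow> real) \<Rightarrow> ('a \<Rightarrow> real) \<Rightarrow> ('a \<Rightarrow> real) \<Rightarrow> real \<Rightarrow> real \<Rightarrow> ereal" where
  "Vtilde M p q c eta \<alpha> = (if \<alpha> = 0 then Mval (space M) p q c else Valpha M p q c eta \<alpha>)"

definition ctilde :: "'a measure \<Rightarrow> ('a \<Rightarrow> real) \<Rightarrow> ('a \<Rightarrow> real) \<Rightarrow> ('a \<Rightarrow> real) \<Rightarrow> real \<Rightarrow> ereal" where
  "ctilde M p q c eta = (INF \<alpha>\<in>{0..}. Vtilde M p q c eta \<alpha>)"

text \<open>exp of an extended real (exp(-infinity) = 0; the +infinity case never arises below).\<close>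
definition exp_ereal :: "ereal \<Rightarrow> real" where
  "exp_ereal z = (case z of ereal r \<Rightarrow> exp r | _ \<Rightarrow> 0)"

definition neg_ln :: "real \<Rightarrow> ereal" where
  "neg_ln t = (if t > 0 then ereal (- ln t) else \<infinity>)"

end

theory Submission
  imports Defs
begin

lemma pos_int:
  fixes h w :: "'a \<Rightarrow> real"
  assumes hi: "integrable M h" and h0: "\<forall>x\<in>space M. 0 \<le> h x"
    and hw: "\<forall>x\<in>space M. h x = 0 \<longrightarrow> w x = 0"
    and wm: "w \<in> borel_measurable M" and w1: "integral\<^sup>L M w = 1"
  shows "integral\<^sup>L M h > 0"
proof -
  have ge: "integral\<^sup>L M h \<ge> 0" using h0 by (intro integral_nonneg_AE AE_I2) auto
  have "integral\<^sup>L M h \<noteq> 0"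
  proof
    assume "integral\<^sup>L M h = 0"
    then have "AE x in M. h x = 0" using integral_nonneg_eq_0_iff_AE[OF hi] h0 by auto
    then have "AE x in M. w x = 0" by (rule AE_mp) (use hw in \<open>auto intro!: AE_I2\<close>)
    then have "integral\<^sup>L M w = integral\<^sup>L M (\<lambda>x. 0)"
      by (intro integral_cong_AE) (auto simp: wm)
    then show False using w1 by simp
  qed
  then show ?thesis using ge by linarith
qed

lemma kl_pt:
  fixes p q :: real
  assumes "p \<ge> 0" "q \<ge> 0" "p > 0 \<longrightarrow> q > 0"
  shows "p * ln (p / q) \<ge> p - q"
proof (cases "p > 0")
  case True
  then have q: "q > 0" using assms by auto
  have "ln (q / p) \<le> q / p - 1" using True q by (intro ln_le_minus_one) auto
  moreover have "ln (p / q) = - ln (q / p)" using True q by (simp add: ln_div)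
  ultimately have "ln (p / q) \<ge> 1 - q / p" by linarith
  then have "p * ln (p / q) \<ge> p * (1 - q / p)" using True by (intro mult_left_mono) auto
  moreover have "p * (1 - q / p) = p - q" using True by (simp add: field_simps)
  ultimately show ?thesis by linarith
next
  case False
  then show ?thesis using assms by auto
qed

lemma jensen_pt:
  fixes p q c Z a :: real
  assumes p: "p > 0" and q: "q > 0" and Z: "Z > 0" and a: "a > 0"
  shows "p * ln (p * exp c / q) \<le> a * (p * (p * exp c / q) powr (1 / a) / Z - p + p * ln Z)"
proof -
  define r where "r = p * exp c / q"
  have r: "r > 0" using p q by (simp add: r_def)
  define s where "s = r powr (1 / a)"
  have s: "s > 0" using r by (simp add: s_def)
  have "ln (s / Z) \<le> s / Z - 1" using s Z by (intro ln_le_minus_one) auto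
  moreover have "ln (s / Z) = ln s - ln Z" using s Z by (simp add: ln_div)
  moreover have "ln s = (1 / a) * ln r" by (simp add: s_def)
  ultimately have "(1 / a) * ln r \<le> s / Z - 1 + ln Z" by linarith
  then have "a * ((1 / a) * ln r) \<le> a * (s / Z - 1 + ln Z)" using a by (intro mult_left_mono) auto
  then have "ln r \<le> a * (s / Z - 1 + ln Z)" using a by simp
  then have "p * ln r \<le> p * (a * (s / Z - 1 + ln Z))" using p by (intro mult_left_mono) auto
  then show ?thesis by (simp add: r_def[symmetric] s_def[symmetric] algebra_simps)
qed

lemma ctilde_ge:
  fixes M :: "'a measure" and p q c :: "'a \<Rightarrow> real" and eta B :: real
  assumes pi: "integrable M p" and p1: "integral\<^sup>L M p = 1"
   and p0: "\<forall>x\<in>space M. 0 \<le> p x" and q0: "\<forall>x\<in>space M. 0 \<le> q x"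
   and qi: "integrable M q" and sp: "\<forall>x\<in>space M. p x > 0 \<longrightarrow> q x > 0"
   and c0: "\<forall>x\<in>space M. 0 \<le> c x" and cB: "\<forall>x\<in>space M. c x \<le> B"
   and cm: "c \<in> borel_measurable M"
   and kli: "integrable M (\<lambda>y. p y * ln (p y / q y))"
   and eta0: "eta \<ge> 0"
  shows "ereal (KL M p q + expect M p c) \<le> ctilde M p q c eta"
proof -
  have pm[measurable]: "p \<in> borel_measurable M" using pi by auto
  have qm[measurable]: "q \<in> borel_measurable M" using qi by auto
  have cm'[measurable]: "c \<in> borel_measurable M" by (rule cm)
  have pci: "integrable M (\<lambda>y. p y * c y)"
  proof (rule Bochner_Integration.integrable_bound)
    show "integrable M (\<lambda>y. max B 0 * p y)" using pi by simp
    show "(\<lambda>y. p y * c y) \<in> borel_measurable M" by measurable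
    show "AE x in M. norm (p x * c x) \<le> norm (max B 0 * p x)"
    proof (rule AE_I2)
      fix x assume x: "x \<in> space M"
      show "norm (p x * c x) \<le> norm (max B 0 * p x)"
        proof -
        have "c x \<le> max B 0" using cB x by auto
        then have "p x * c x \<le> p x * max B 0" using p0 x by (intro mult_left_mono) auto
        then show ?thesis using p0 c0 x by (simp add: abs_mult mult.commute)
      qed
    qed
  qed
  define L where "L y = p y * ln (p y * exp (c y) / q y)" for y
  have Leq: "L y = p y * ln (p y / q y) + p y * c y" if y: "y \<in> space M" for y
  proof (cases "p y > 0")
    case True
    then have "q y > 0" using sp y by auto
    then have "ln (p y * exp (c y) / q y) = ln (p y / q y) + c y"
      using True by (simp add: ln_div ln_mult)
    then show ?thesis by (simp add: L_def algebra_simps)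
  next
    case False
    then have "p y = 0" using p0 y by force
    then show ?thesis by (simp add: L_def)
  qed
  have Li: "integrable M L"
  proof -
    have "integrable M (\<lambda>y. p y * ln (p y / q y) + p y * c y)"
      using kli pci by (rule Bochner_Integration.integrable_add)
    then show ?thesis by (rule Bochner_Integration.integrable_cong[THEN iffD1, rotated 2]) (auto simp: Leq)
  qed
  have Ieq: "integral\<^sup>L M L = KL M p q + expect M p c"
  proof -
    have "integral\<^sup>L M L = integral\<^sup>L M (\<lambda>y. p y * ln (p y / q y) + p y * c y)"
      by (intro Bochner_Integration.integral_cong) (auto simp: Leq)
    also have "\<dots> = KL M p q + expect M p c"
      using kli pci by (simp add: KL_def expect_def)
    finally show ?thesis .
  qed
  have Lle: "L y \<le> p y * t" if y: "y \<in> space M" and t: "\<forall>x\<in>space M. p x > 0 \<longrightarrow> ln (p x * exp (c x) / q x) \<le> t" for y t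
  proof (cases "p y > 0")
    case True
    then show ?thesis using t y by (auto simp: L_def intro!: mult_left_mono)
  next
    case False
    then have "p y = 0" using p0 y by force
    then show ?thesis by (simp add: L_def)
  qed
  obtain x0 where x0: "x0 \<in> space M" "p x0 > 0"
  proof (rule ccontr)
    assume "\<not> thesis"
    then have "\<forall>x\<in>space M. p x = 0" using that p0 by force
    then have "integral\<^sup>L M p = integral\<^sup>L M (\<lambda>x. 0)" by (intro Bochner_Integration.integral_cong) auto
    then show False using p1 by simp
  qed
  have mval: "ereal (integral\<^sup>L M L) \<le> Mval (space M) p q c"
  proof -
    define S where "S = {x\<in>space M. p x > 0}"
    have up: "ereal (ln (p x * exp (c x) / q x)) \<le> Mval (space M) p q c" if "x \<in> S" for x
      unfolding Mval_def S_def[symmetric] using that by (rule SUP_upper)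
    show ?thesis
    proof (cases "Mval (space M) p q c" rule: ereal_cases)
      case (real t)
      then have "\<forall>x\<in>space M. p x > 0 \<longrightarrow> ln (p x * exp (c x) / q x) \<le> t"
        using up by (auto simp: S_def)
      then have "integral\<^sup>L M L \<le> integral\<^sup>L M (\<lambda>y. p y * t)"
        using Li pi Lle by (intro integral_mono) auto
      also have "\<dots> = t" using p1 by simp
      finally show ?thesis using real by simp
    next
      case PInf
      then show ?thesis by simp
    next
      case MInf
      then show ?thesis using up[of x0] x0 by (simp add: S_def)
    qed
  qed
  have valpha: "ereal (integral\<^sup>L M L) \<le> Valpha M p q c eta a" if a: "a > 0" for a
  proof -
    define G where "G y = p y * (p y * exp (c y) / q y) powr (1 / a)" for y
    define E where "E = (\<integral>\<^sup>+y. ennreal (G y) \<partial>M)"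
    have V: "Valpha M p q c eta a = (if E = \<infinity> then \<infinity> else ereal (a * ln (enn2real E) + a * eta))"
      unfolding Valpha_def E_def G_def Let_def by simp
    show ?thesis
    proof (cases "E = \<infinity>")
      case True
      then show ?thesis using V by simp
    next
      case False
      have Gm[measurable]: "G \<in> borel_measurable M" unfolding G_def by measurable
      have G0: "\<forall>y\<in>space M. G y \<ge> 0" using p0 by (auto simp: G_def)
      have Eeq: "E = ennreal (enn2real E)" using False by (simp add: less_top)
      have Gi: "integrable M G"
        by (rule integrableI_nn_integral_finite[where x="enn2real E"])
           (use G0 Eeq in \<open>auto simp: E_def intro!: AE_I2\<close>)
      have GZ: "integral\<^sup>L M G = enn2real E"
        unfolding E_def using Gi G0 by (intro integral_eq_nn_integral AE_I2) auto
      have hw: "\<forall>y\<in>space M. G y = 0 \<longrightarrow> p y = 0"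
      proof (intro ballI impI)
        fix y assume y: "y \<in> space M" and "G y = 0"
        show "p y = 0"
        proof (rule ccontr)
          assume "p y \<noteq> 0"
          then have "p y > 0" using p0 y by force
          moreover then have "q y > 0" using sp y by auto
          ultimately have "G y > 0" by (simp add: G_def)
          then show False using \<open>G y = 0\<close> by simp
        qed
      qed
      have Zpos: "integral\<^sup>L M G > 0" by (rule pos_int[OF Gi G0 hw pm p1])
      define Z where "Z = integral\<^sup>L M G"
      have Z: "Z > 0" using Zpos by (simp add: Z_def)
      have "integral\<^sup>L M L \<le> integral\<^sup>L M (\<lambda>y. a * (G y / Z - p y + p y * ln Z))"
      proof (rule integral_mono)
        show "integrable M (\<lambda>y. a * (G y / Z - p y + p y * ln Z))" using Gi pi by simp
        fix y assume y: "y \<in> space M"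
        show "L y \<le> a * (G y / Z - p y + p y * ln Z)"
        proof (cases "p y > 0")
          case True
          then have "q y > 0" using sp y by auto
          then show ?thesis using jensen_pt[OF True _ Z a] True by (simp add: L_def G_def)
        next
          case False
          then have "p y = 0" using p0 y by force
          then show ?thesis by (simp add: L_def G_def)
        qed
      qed (rule Li)
      also have "\<dots> = a * (integral\<^sup>L M G / Z - integral\<^sup>L M p + integral\<^sup>L M p * ln Z)"
        using Gi pi by simp
      also have "\<dots> = a * ln Z" using Z p1 by (simp add: Z_def)
      also have "\<dots> \<le> a * ln (enn2real E) + a * eta" using a eta0 GZ by (simp add: Z_def)
      finally show ?thesis using V False by simp
    qed
  qed
  have main: "ereal (integral\<^sup>L M L) \<le> Vtilde M p q c eta a" if a: "a \<ge> 0" for a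
    using mval valpha[of a] a by (cases "a = 0") (auto simp: Vtilde_def)
  show ?thesis unfolding ctilde_def Ieq[symmetric]
    by (rule INF_greatest) (use main in auto)
qed

lemma kl_nonneg:
  fixes M :: "'a measure" and p q :: "'a \<Rightarrow> real"
  assumes pi: "integrable M p" and p1: "integral\<^sup>L M p = 1"
   and p0: "\<forall>x\<in>space M. 0 \<le> p x" and q0: "\<forall>x\<in>space M. 0 \<le> q x"
   and qi: "integrable M q" and q1: "integral\<^sup>L M q = 1" and sp: "\<forall>x\<in>space M. p x > 0 \<longrightarrow> q x > 0"
   and kli: "integrable M (\<lambda>y. p y * ln (p y / q y))"
  shows "KL M p q \<ge> 0"
proof -
  have "integral\<^sup>L M (\<lambda>y. p y - q y) \<le> integral\<^sup>L M (\<lambda>y. p y * ln (p y / q y))"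
    using pi qi kli p0 q0 sp by (intro integral_mono kl_pt) auto
  moreover have "integral\<^sup>L M (\<lambda>y. p y - q y) = 0" using pi qi p1 q1 by simp
  ultimately show ?thesis by (simp add: KL_def)
qed

theorem lemma5:
  fixes disc :: bool
    and X :: "(real^'n) set" and U :: "(real^'m) set"
    and k :: nat and xprev :: "real^'n"
    and qu :: "real^'n \<Rightarrow> real^'m \<Rightarrow> real"
    and pbar qx :: "real^'n \<Rightarrow> real^'m \<Rightarrow> real^'n \<Rightarrow> real"
    and eta :: "nat \<Rightarrow> real^'n \<Rightarrow> real^'m \<Rightarrow> real"
    and cbar :: "real^'n \<Rightarrow> real"
    and cu :: "nat \<Rightarrow> real^'m \<Rightarrow> real"
  assumes X_ok: "admissible_space disc X" and U_ok: "admissible_space disc U"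
    and xprev: "xprev \<in> X"
    and qu_nonneg: "\<forall>x\<in>X. \<forall>u\<in>U. qu x u \<ge> 0"
    and qu_meas: "\<forall>x\<in>X. qu x \<in> borel_measurable (ref_measure disc U)"
    and qu_int: "\<forall>x\<in>X. integrable (ref_measure disc U) (qu x)"
    and qu_one: "\<forall>x\<in>X. (\<integral>u. qu x u \<partial>ref_measure disc U) = 1"
    and pbar_nonneg: "\<forall>x\<in>X. \<forall>u\<in>U. \<forall>y\<in>X. pbar x u y \<ge> 0"
    and pbar_meas: "\<forall>x\<in>X. (\<lambda>(u, y). pbar x u y)
                      \<in> borel_measurable (ref_measure disc U \<Otimes>\<^sub>M ref_measure disc X)"
    and pbar_int: "\<forall>x\<in>X. \<forall>u\<in>U. integrable (ref_measure disc X) (pbar x u)"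
    and pbar_one: "\<forall>x\<in>X. \<forall>u\<in>U. (\<integral>y. pbar x u y \<partial>ref_measure disc X) = 1"
    and qx_nonneg: "\<forall>x\<in>X. \<forall>u\<in>U. \<forall>y\<in>X. qx x u y \<ge> 0"
    and qx_meas: "\<forall>x\<in>X. (\<lambda>(u, y). qx x u y)
                      \<in> borel_measurable (ref_measure disc U \<Otimes>\<^sub>M ref_measure disc X)"
    and qx_int: "\<forall>x\<in>X. \<forall>u\<in>U. integrable (ref_measure disc X) (qx x u)"
    and qx_one: "\<forall>x\<in>X. \<forall>u\<in>U. (\<integral>y. qx x u y \<partial>ref_measure disc X) = 1"
    and qx_bounded: "\<exists>B. \<forall>x\<in>X. \<forall>u\<in>U. \<forall>y\<in>X. qx x u y \<le> B"
    and supp: "\<forall>x\<in>X. \<forall>u\<in>U. \<forall>y\<in>X. pbar x u y > 0 \<longrightarrow> qx x u y > 0"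
    and eta_pos: "\<forall>j. \<forall>x\<in>X. \<forall>u\<in>U. eta j x u > 0"
    and eta_bounded: "\<exists>B. \<forall>j. \<forall>x\<in>X. \<forall>u\<in>U. eta j x u \<le> B"
    and cbar_nonneg: "\<forall>y\<in>X. cbar y \<ge> 0"
    and cbar_bounded: "\<exists>B. \<forall>y\<in>X. cbar y \<le> B"
    and cbar_meas: "cbar \<in> borel_measurable (ref_measure disc X)"
    and cu_nonneg: "\<forall>j. \<forall>u\<in>U. cu j u \<ge> 0"
    and cu_meas: "\<forall>j. cu j \<in> borel_measurable (ref_measure disc U)"
    and KL_int: "\<forall>u\<in>U. integrable (ref_measure disc X)
                   (\<lambda>y. pbar xprev u y * ln (pbar xprev u y / qx xprev u y))"
  shows "neg_ln (\<integral>u. qu xprev u *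
            exp (- KL (ref_measure disc X) (pbar xprev u) (qx xprev u)
                 - expect (ref_measure disc X) (pbar xprev u) cbar
                 - cu k u) \<partial>ref_measure disc U)
         < neg_ln (\<integral>u. qu xprev u *
            exp_ereal (- (ereal (eta k xprev u)
                          + ctilde (ref_measure disc X) (pbar xprev u) (qx xprev u) cbar (eta k xprev u)
                          + ereal (cu k u))) \<partial>ref_measure disc U)"
proof -
  define MX where "MX = ref_measure disc X"
  define MU where "MU = ref_measure disc U"
  have spX: "space MX = X" by (simp add: MX_def ref_measure_def space_restrict_space)
  have spU: "space MU = U" by (simp add: MU_def ref_measure_def space_restrict_space)
  have sfX: "sigma_finite_measure MX"
  proof (cases disc)
    case True
    then have Xl: "X \<subseteq> {x. \<forall>b\<in>Basis. x \<bullet> b \<in> \<int>}" using X_ok by (simp add: admissible_space_def)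
    have inj: "inj_on (\<lambda>x. (\<chi> i. \<lfloor>x $ i\<rfloor>) :: int^'n) X"
    proof (rule inj_onI)
      fix x y assume x: "x \<in> X" and y: "y \<in> X" and e: "(\<chi> i. \<lfloor>x $ i\<rfloor>) = ((\<chi> i. \<lfloor>y $ i\<rfloor>) :: int^'n)"
      show "x = y"
      proof (rule vec_eq_iff[THEN iffD2], rule allI)
        fix i
        have "x \<bullet> axis i 1 \<in> \<int>" "y \<bullet> axis i 1 \<in> \<int>" using Xl x y by (auto simp: cart_eq_inner_axis[symmetric] Basis_vec_def)
        then have xi: "x $ i \<in> \<int>" and yi: "y $ i \<in> \<int>" by (simp_all add: inner_axis)
        have "\<lfloor>x $ i\<rfloor> = \<lfloor>y $ i\<rfloor>" using e by (metis vec_lambda_beta)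
        then show "x $ i = y $ i" using xi yi by (metis Ints_cases floor_of_int)
      qed
    qed
    have "countable X" by (rule countable_image_inj_on[OF _ inj]) (rule countable_subset[OF subset_UNIV countableI_type])
    then show ?thesis using True by (simp add: MX_def ref_measure_def sigma_finite_measure_count_space_countable)
  next
    case False
    then have "X \<in> sets lborel" using X_ok by (simp add: admissible_space_def)
    then show ?thesis using False
      by (simp add: MX_def ref_measure_def sigma_finite_measure_restrict_space[OF sigma_finite_lborel])
  qed
  obtain B where B: "\<forall>y\<in>X. cbar y \<le> B" using cbar_bounded by blast
  define KLu where "KLu u = KL MX (pbar xprev u) (qx xprev u)" for u
  define Eu where "Eu u = expect MX (pbar xprev u) cbar" for u
  define g1 where "g1 u = exp (- KLu u - Eu u - cu k u)" for u
  define g2 where "g2 u = exp_ereal (- (ereal (eta k xprev u)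
                          + ctilde MX (pbar xprev u) (qx xprev u) cbar (eta k xprev u)
                          + ereal (cu k u)))" for u
  have peru: "0 \<le> g2 u \<and> g2 u < g1 u \<and> g1 u \<le> 1" if u: "u \<in> U" for u
  proof -
    have pi: "integrable MX (pbar xprev u)" using pbar_int xprev u by (simp add: MX_def)
    have qi: "integrable MX (qx xprev u)" using qx_int xprev u by (simp add: MX_def)
    have p1: "integral\<^sup>L MX (pbar xprev u) = 1" using pbar_one xprev u by (simp add: MX_def)
    have q1: "integral\<^sup>L MX (qx xprev u) = 1" using qx_one xprev u by (simp add: MX_def)
    have p0: "\<forall>y\<in>space MX. 0 \<le> pbar xprev u y" using pbar_nonneg xprev u spX by auto
    have q0: "\<forall>y\<in>space MX. 0 \<le> qx xprev u y" using qx_nonneg xprev u spX by auto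
    have sp: "\<forall>y\<in>space MX. pbar xprev u y > 0 \<longrightarrow> qx xprev u y > 0" using supp xprev u spX by auto
    have c0: "\<forall>y\<in>space MX. 0 \<le> cbar y" using cbar_nonneg spX by auto
    have cB: "\<forall>y\<in>space MX. cbar y \<le> B" using B spX by auto
    have cm: "cbar \<in> borel_measurable MX" using cbar_meas by (simp add: MX_def)
    have kli: "integrable MX (\<lambda>y. pbar xprev u y * ln (pbar xprev u y / qx xprev u y))"
      using KL_int u by (simp add: MX_def)
    have eta: "eta k xprev u > 0" using eta_pos xprev u by auto
    have ct: "ereal (KLu u + Eu u) \<le> ctilde MX (pbar xprev u) (qx xprev u) cbar (eta k xprev u)"
      unfolding KLu_def Eu_def using eta by (intro ctilde_ge[OF pi p1 p0 q0 qi sp c0 cB cm kli]) auto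
    have kl0: "KLu u \<ge> 0" unfolding KLu_def by (rule kl_nonneg[OF pi p1 p0 q0 qi q1 sp kli])
    have e0: "Eu u \<ge> 0" unfolding Eu_def expect_def using p0 c0 by (intro integral_nonneg_AE AE_I2) auto
    have cu0: "cu k u \<ge> 0" using cu_nonneg u by auto
    have g11: "g1 u \<le> 1" using kl0 e0 cu0 by (simp add: g1_def)
    show ?thesis
    proof (cases "ctilde MX (pbar xprev u) (qx xprev u) cbar (eta k xprev u)" rule: ereal_cases)
      case (real t)
      then have "KLu u + Eu u \<le> t" using ct by simp
      then have "g2 u = exp (- (eta k xprev u + t + cu k u))" "- (eta k xprev u + t + cu k u) < - KLu u - Eu u - cu k u"
        using real eta by (simp_all add: g2_def exp_ereal_def)
      then show ?thesis using g11 by (simp add: g1_def)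
    next
      case PInf
      then show ?thesis using g11 by (simp add: g1_def g2_def exp_ereal_def)
    next
      case MInf
      then show ?thesis using ct by simp
    qed
  qed
  have Pm[measurable]: "(\<lambda>z. pbar xprev (fst z) (snd z)) \<in> borel_measurable (MU \<Otimes>\<^sub>M MX)"
    using pbar_meas xprev by (simp add: MU_def MX_def case_prod_beta')
  have Qm[measurable]: "(\<lambda>z. qx xprev (fst z) (snd z)) \<in> borel_measurable (MU \<Otimes>\<^sub>M MX)"
    using qx_meas xprev by (simp add: MU_def MX_def case_prod_beta')
  have cm[measurable]: "cbar \<in> borel_measurable MX" using cbar_meas by (simp add: MX_def)
  have cum[measurable]: "cu k \<in> borel_measurable MU" using cu_meas by (simp add: MU_def)
  have qum[measurable]: "qu xprev \<in> borel_measurable MU" using qu_meas xprev by (simp add: MU_def)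
  have KLm[measurable]: "KLu \<in> borel_measurable MU"
  proof -
    have "(\<lambda>u. \<integral>y. pbar xprev u y * ln (pbar xprev u y / qx xprev u y) \<partial>MX) \<in> borel_measurable MU"
      by (rule sigma_finite_measure.borel_measurable_lebesgue_integral[OF sfX])
         (simp add: case_prod_beta')
    moreover have "KLu = (\<lambda>u. \<integral>y. pbar xprev u y * ln (pbar xprev u y / qx xprev u y) \<partial>MX)"
      by (simp add: fun_eq_iff KLu_def KL_def)
    ultimately show ?thesis by simp
  qed
  have Em[measurable]: "Eu \<in> borel_measurable MU"
  proof -
    have "(\<lambda>u. \<integral>y. pbar xprev u y * cbar y \<partial>MX) \<in> borel_measurable MU"
      by (rule sigma_finite_measure.borel_measurable_lebesgue_integral[OF sfX])
         (simp add: case_prod_beta')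
    moreover have "Eu = (\<lambda>u. \<integral>y. pbar xprev u y * cbar y \<partial>MX)"
      by (simp add: fun_eq_iff Eu_def expect_def)
    ultimately show ?thesis by simp
  qed
  have g1m[measurable]: "g1 \<in> borel_measurable MU" unfolding g1_def by measurable
  have qui: "integrable MU (qu xprev)" using qu_int xprev by (simp add: MU_def)
  have qu1: "integral\<^sup>L MU (qu xprev) = 1" using qu_one xprev by (simp add: MU_def)
  have qu0: "\<forall>u\<in>space MU. 0 \<le> qu xprev u" using qu_nonneg xprev spU by auto
  have i1: "integrable MU (\<lambda>u. qu xprev u * g1 u)"
  proof (rule Bochner_Integration.integrable_bound[OF qui])
    show "(\<lambda>u. qu xprev u * g1 u) \<in> borel_measurable MU" by measurable
    show "AE x in MU. norm (qu xprev x * g1 x) \<le> norm (qu xprev x)"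
    proof (rule AE_I2)
      fix u assume u: "u \<in> space MU"
      then have "0 \<le> g1 u" "g1 u \<le> 1" "0 \<le> qu xprev u" using peru[of u] qu0 spU by auto
      then show "norm (qu xprev u * g1 u) \<le> norm (qu xprev u)"
        by (simp add: abs_mult mult_left_le)
    qed
  qed
  have t1pos: "integral\<^sup>L MU (\<lambda>u. qu xprev u * g1 u) > 0"
  proof (rule pos_int[OF i1 _ _ qum qu1])
    show "\<forall>x\<in>space MU. 0 \<le> qu xprev x * g1 x" using qu0 peru spU by fastforce
    show "\<forall>x\<in>space MU. qu xprev x * g1 x = 0 \<longrightarrow> qu xprev x = 0" using peru spU by fastforce
  qed
  have t12: "integral\<^sup>L MU (\<lambda>u. qu xprev u * g2 u) < integral\<^sup>L MU (\<lambda>u. qu xprev u * g1 u)"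
  proof (cases "integrable MU (\<lambda>u. qu xprev u * g2 u)")
    case True
    have "integral\<^sup>L MU (\<lambda>u. qu xprev u * g1 u - qu xprev u * g2 u) > 0"
    proof (rule pos_int[OF _ _ _ qum qu1])
      show "integrable MU (\<lambda>u. qu xprev u * g1 u - qu xprev u * g2 u)" using i1 True by simp
      show "\<forall>x\<in>space MU. 0 \<le> qu xprev x * g1 x - qu xprev x * g2 x"
      proof
        fix x assume "x \<in> space MU"
        then have "g2 x \<le> g1 x" "0 \<le> qu xprev x" using peru spU qu0 by fastforce+
        then show "0 \<le> qu xprev x * g1 x - qu xprev x * g2 x"
          by (simp add: right_diff_distrib[symmetric])
      qed
      show "\<forall>x\<in>space MU. qu xprev x * g1 x - qu xprev x * g2 x = 0 \<longrightarrow> qu xprev x = 0"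
      proof (intro ballI impI)
        fix x assume "x \<in> space MU" "qu xprev x * g1 x - qu xprev x * g2 x = 0"
        moreover have "g2 x < g1 x" using peru spU \<open>x \<in> space MU\<close> by fastforce
        ultimately show "qu xprev x = 0" by (simp add: right_diff_distrib[symmetric])
      qed
    qed
    then show ?thesis using i1 True by simp
  next
    case False
    then show ?thesis using t1pos by (simp add: not_integrable_integral_eq)
  qed
  show ?thesis
    using t1pos t12 unfolding MX_def[symmetric] MU_def[symmetric] g1_def[symmetric] KLu_def[symmetric]
      Eu_def[symmetric] g2_def[symmetric]
    by (auto simp: neg_ln_def)
qed

end
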